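(* Let $x=[x_1,\dots,x_N]\in S_N$ contain a minimal $[4321]$-pattern at positions $p<q<r<s$, and let $x'$ be obtained from $x$ by exchanging the entries in positions $q$ and $r$ (so that $(x'_p,x'_q,x'_r,x'_s)$ is a $[4231]$-pattern). Then $\omega(\pi_{x'})=\omega(\pi_x)$.
   Context: Permutations are in one-line notation and composed as functions. $H_0(S_N)$ is generated by $\pi_1,\dots,\pi_{N-1}$ with $\pi_i^2=\pi_i$, $\pi_i\pi_j=\pi_j\pi_i$ for $|i-j|\ge2$, $\pi_i\pi_{i+1}\pi_i=\pi_{i+1}\pi_i\pi_{i+1}$; $\pi_w=\pi_{i_1}\cdots\pi_{i_k}$ for a reduced word $w=s_{i_1}\cdots s_{i_k}$. $\phi$ is the quotient morphism from $H_0(S_N)$ onto its quotient by the relations $\pi_i\pi_{i+1}\pi_i=\pi_i\pi_{i+1}$ ($1\le i\le N-2$), $\pi_i\mapsto\pi_i$; $\Psi$ is the automorphism of $H_0(S_N)$ with $\Psi(\pi_i)=\pi_{N-i}$; $\omega(y)=(\phi(y),\phi(\Psi(y)))$. A $[4321]$-pattern is a quadruple of positions $p<q<r<s$ with $x_p>x_q>x_r>x_s$; its width is $(q-p,r-q,s-r)$, and it is minimal if its width is lexicographically minimal among all $[4321]$-patterns in $x$. *)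

theory Defs
  imports "HOL-Combinatorics.Combinatorics" "HOL-Library.Product_Lexorder"
begin

text \<open>Permutations of S_N in one-line notation: a function x with x permutes {1..N},
  the one-line notation being [x 1, ..., x N]. Composition is function composition.\<close>

definition st :: "nat \<Rightarrow> nat \<Rightarrow> nat" where
  "st i = Transposition.transpose i (Suc i)"

definition word_perm :: "nat list \<Rightarrow> nat \<Rightarrow> nat" where
  "word_perm w = foldr (\<lambda>i f. st i \<circ> f) w id"

definition is_word :: "nat \<Rightarrow> nat list \<Rightarrow> bool" where
  "is_word N w \<longleftrightarrow> set w \<subseteq> {1..<N}"

definition reduced_word :: "nat \<Rightarrow> (nat \<Rightarrow> nat) \<Rightarrow> nat list \<Rightarrow> bool" where
  "reduced_word N x w \<longleftrightarrow> is_word N w \<and> word_perm w = x \<and>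
     (\<forall>v. is_word N v \<and> word_perm v = x \<longrightarrow> length w \<le> length v)"

text \<open>A chosen reduced word; pi_x is represented by it (any choice gives the same
  element of H_0(S_N), by Matsumoto's theorem, since the braid relations hold there).\<close>
definition red_word :: "nat \<Rightarrow> (nat \<Rightarrow> nat) \<Rightarrow> nat list" where
  "red_word N x = (SOME w. reduced_word N x w)"

inductive hecke_base :: "nat \<Rightarrow> nat list \<Rightarrow> nat list \<Rightarrow> bool" for N where
  idem: "1 \<le> i \<Longrightarrow> i < N \<Longrightarrow> hecke_base N [i, i] [i]"
| comm: "1 \<le> i \<Longrightarrow> i < N \<Longrightarrow> 1 \<le> j \<Longrightarrow> j < N \<Longrightarrow> i + 2 \<le> j \<or> j + 2 \<le> i
           \<Longrightarrow> hecke_base N [i, j] [j, i]"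
| braid: "1 \<le> i \<Longrightarrow> i + 1 < N \<Longrightarrow> hecke_base N [i, Suc i, i] [Suc i, i, Suc i]"

inductive quot_base :: "nat \<Rightarrow> nat list \<Rightarrow> nat list \<Rightarrow> bool" for N where
  hecke: "hecke_base N u v \<Longrightarrow> quot_base N u v"
| extra: "1 \<le> i \<Longrightarrow> i + 1 < N \<Longrightarrow> quot_base N [i, Suc i, i] [i, Suc i]"

inductive quot_cong :: "nat \<Rightarrow> nat list \<Rightarrow> nat list \<Rightarrow> bool" for N where
  step: "quot_base N u v \<Longrightarrow> is_word N xs \<Longrightarrow> is_word N ys
           \<Longrightarrow> quot_cong N (xs @ u @ ys) (xs @ v @ ys)"
| refl: "quot_cong N w w"
| sym: "quot_cong N u v \<Longrightarrow> quot_cong N v u"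
| trans: "quot_cong N u v \<Longrightarrow> quot_cong N v w \<Longrightarrow> quot_cong N u w"

definition phi :: "nat \<Rightarrow> nat list \<Rightarrow> nat list set" where
  "phi N w = {v. quot_cong N w v}"

definition Psi :: "nat \<Rightarrow> nat list \<Rightarrow> nat list" where
  "Psi N w = map (\<lambda>i. N - i) w"

definition omega :: "nat \<Rightarrow> nat list \<Rightarrow> nat list set \<times> nat list set" where
  "omega N w = (phi N w, phi N (Psi N w))"

definition omega_perm :: "nat \<Rightarrow> (nat \<Rightarrow> nat) \<Rightarrow> nat list set \<times> nat list set" where
  "omega_perm N x = omega N (red_word N x)"

definition is_4321 :: "nat \<Rightarrow> (nat \<Rightarrow> nat) \<Rightarrow> nat \<Rightarrow> nat \<Rightarrow> nat \<Rightarrow> nat \<Rightarrow> bool" where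
  "is_4321 N x p q r s \<longleftrightarrow> 1 \<le> p \<and> p < q \<and> q < r \<and> r < s \<and> s \<le> N \<and>
     x p > x q \<and> x q > x r \<and> x r > x s"

definition width :: "nat \<Rightarrow> nat \<Rightarrow> nat \<Rightarrow> nat \<Rightarrow> nat \<times> nat \<times> nat" where
  "width p q r s = (q - p, r - q, s - r)"

text \<open>Lexicographic order on triples (Product_Lexorder).\<close>
definition minimal_4321 :: "nat \<Rightarrow> (nat \<Rightarrow> nat) \<Rightarrow> nat \<Rightarrow> nat \<Rightarrow> nat \<Rightarrow> nat \<Rightarrow> bool" where
  "minimal_4321 N x p q r s \<longleftrightarrow> is_4321 N x p q r s \<and>
     (\<forall>p' q' r' s'. is_4321 N x p' q' r' s' \<longrightarrow> width p q r s \<le> width p' q' r' s')"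

end

theory Submission imports Defs begin

lemma is_word_append[simp]: "is_word N (u @ v) \<longleftrightarrow> is_word N u \<and> is_word N v"
  by (auto simp: is_word_def)
lemma is_word_Cons[simp]: "is_word N (a # v) \<longleftrightarrow> 1 \<le> a \<and> a < N \<and> is_word N v"
  by (auto simp: is_word_def)
lemma is_word_Nil[simp]: "is_word N []"
  by (auto simp: is_word_def)

lemma qc_ctx: "quot_cong N u v \<Longrightarrow> is_word N xs \<Longrightarrow> is_word N ys
   \<Longrightarrow> quot_cong N (xs @ u @ ys) (xs @ v @ ys)"
proof (induction rule: quot_cong.induct)
  case (step u v xs' ys')
  have "quot_cong N ((xs @ xs') @ u @ (ys' @ ys)) ((xs @ xs') @ v @ (ys' @ ys))"
    using step by (intro quot_cong.step) auto
  then show ?case by simp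
next
  case (refl w) show ?case by (rule quot_cong.refl)
next
  case (sym u v) then show ?case by (blast intro: quot_cong.sym)
next
  case (trans u v w) then show ?case by (blast intro: quot_cong.trans)
qed

lemma qc_base: "quot_base N u v \<Longrightarrow> quot_cong N u v"
  using quot_cong.step[of N u v "[]" "[]"] by simp

lemma qc_comm: "1 \<le> i \<Longrightarrow> i < N \<Longrightarrow> 1 \<le> j \<Longrightarrow> j < N \<Longrightarrow> i + 2 \<le> j \<or> j + 2 \<le> i
   \<Longrightarrow> quot_cong N [i, j] [j, i]"
  by (intro qc_base quot_base.hecke hecke_base.comm)
lemma qc_idem: "1 \<le> i \<Longrightarrow> i < N \<Longrightarrow> quot_cong N [i, i] [i]"
  by (intro qc_base quot_base.hecke hecke_base.idem)
lemma qc_extra: "1 \<le> i \<Longrightarrow> i + 1 < N \<Longrightarrow> quot_cong N [i, Suc i, i] [i, Suc i]"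
  by (intro qc_base quot_base.extra)
lemma qc_left: "1 \<le> i \<Longrightarrow> i + 1 < N \<Longrightarrow> quot_cong N [Suc i, i, Suc i] [i, Suc i]"
  by (meson qc_base quot_base.hecke hecke_base.braid quot_cong.sym quot_cong.trans qc_extra)

lemma qc_trans: "quot_cong N u v \<Longrightarrow> quot_cong N v w \<Longrightarrow> quot_cong N u w"
  by (rule quot_cong.trans)
lemma qc_sym: "quot_cong N u v \<Longrightarrow> quot_cong N v u"
  by (rule quot_cong.sym)

lemma qc_ctx': "quot_cong N u v \<Longrightarrow> is_word N xs \<Longrightarrow> is_word N ys \<Longrightarrow> a = xs @ u @ ys \<Longrightarrow> b = xs @ v @ ys
   \<Longrightarrow> quot_cong N a b"
  using qc_ctx by blast

lemma upt_split: "a \<le> c \<Longrightarrow> c \<le> d \<Longrightarrow> [a..<d] = [a..<c] @ [c..<d]"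
  using upt_add_eq_append[of a c "d - c"] by simp

lemma is_word_upt: "1 \<le> a \<Longrightarrow> b \<le> N \<Longrightarrow> is_word N [a..<b]"
  by (auto simp: is_word_def)

lemma qc_comm_list: "is_word N Y \<Longrightarrow> 1 \<le> i \<Longrightarrow> i < N \<Longrightarrow> (\<forall>c\<in>set Y. c + 2 \<le> i \<or> i + 2 \<le> c)
   \<Longrightarrow> quot_cong N (Y @ [i]) (i # Y)"
proof (induction Y)
  case Nil then show ?case by (simp add: quot_cong.refl)
next
  case (Cons c Y)
  have 1: "quot_cong N ([c] @ (Y @ [i]) @ []) ([c] @ (i # Y) @ [])"
    using Cons by (intro qc_ctx) auto
  have 2: "quot_cong N ([] @ [c, i] @ Y) ([] @ [i, c] @ Y)"
    using Cons by (intro qc_ctx qc_comm) auto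
  show ?case using qc_trans[OF 1[simplified] 2[simplified]] by simp
qed

lemma qc_right_absorb1: "1 \<le> a \<Longrightarrow> a \<le> c \<Longrightarrow> c \<le> i \<Longrightarrow> i < N
   \<Longrightarrow> quot_cong N ([a..<Suc i] @ [c]) [a..<Suc i]"
proof (cases "c = i")
  case True
  assume h: "1 \<le> a" "a \<le> c" "c \<le> i" "i < N"
  have e: "[a..<Suc i] = [a..<i] @ [i]" using h by simp
  show ?thesis unfolding e using h True
    by (intro qc_ctx'[OF qc_idem[of i N], where xs="[a..<i]" and ys="[]"]) (auto simp: is_word_def)
next
  case False
  assume h: "1 \<le> a" "a \<le> c" "c \<le> i" "i < N"
  have e: "[a..<Suc i] = [a..<c] @ [c, Suc c] @ [c+2..<Suc i]"
    using h False upt_split[of a c "Suc i"] by (simp add: upt_conv_Cons)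
  have 1: "quot_cong N ([a..<c] @ [c, Suc c] @ ([c+2..<Suc i] @ [c])) ([a..<c] @ [c, Suc c] @ (c # [c+2..<Suc i]))"
    using h False by (intro qc_ctx'[OF qc_comm_list, where xs="[a..<c] @ [c, Suc c]" and ys="[]"]) (auto simp: is_word_def)
  have 2: "quot_cong N ([a..<c] @ [c, Suc c, c] @ [c+2..<Suc i]) ([a..<c] @ [c, Suc c] @ [c+2..<Suc i])"
    using h False by (intro qc_ctx qc_extra) (auto simp: is_word_def)
  show ?thesis unfolding e using 1 2 by (simp only: append_assoc append_Cons append_Nil append_Nil2) (rule qc_trans)
qed

lemma qc_left_absorb1: "1 \<le> a \<Longrightarrow> a \<le> c \<Longrightarrow> c \<le> i \<Longrightarrow> i < N
   \<Longrightarrow> quot_cong N (c # [a..<Suc i]) [a..<Suc i]"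
proof (cases "c = a")
  case True
  assume h: "1 \<le> a" "a \<le> c" "c \<le> i" "i < N"
  have e: "[a..<Suc i] = a # [Suc a..<Suc i]" using h by (simp add: upt_rec)
  show ?thesis unfolding e using h True
    by (intro qc_ctx'[OF qc_idem[of a N], where xs="[]" and ys="[Suc a..<Suc i]"]) (auto simp: is_word_def)
next
  case False
  assume h: "1 \<le> a" "a \<le> c" "c \<le> i" "i < N"
  obtain d where d: "c = Suc d" using h False by (cases c) auto
  have e: "[a..<Suc i] = [a..<d] @ [d, Suc d] @ [Suc (Suc d)..<Suc i]"
    using h False d upt_split[of a d "Suc i"] by (simp add: upt_conv_Cons)
  have 1: "quot_cong N ([] @ ([a..<d] @ [c]) @ [d, Suc d] @ [Suc (Suc d)..<Suc i]) ([] @ (c # [a..<d]) @ [d, Suc d] @ [Suc (Suc d)..<Suc i])"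
    using h False d by (intro qc_ctx qc_comm_list) (auto simp: is_word_def)
  have 2: "quot_cong N ([a..<d] @ [Suc d, d, Suc d] @ [Suc (Suc d)..<Suc i]) ([a..<d] @ [d, Suc d] @ [Suc (Suc d)..<Suc i])"
    using h False d by (intro qc_ctx qc_left) (auto simp: is_word_def)
  show ?thesis unfolding e using qc_sym[OF 1] 2 d by (simp only: append_assoc append_Cons append_Nil append_Nil2) (rule qc_trans)
qed

lemma qc_left_absorb: "\<forall>c\<in>set Z. a \<le> c \<and> c \<le> i \<Longrightarrow> 1 \<le> a \<Longrightarrow> i < N
   \<Longrightarrow> quot_cong N (Z @ [a..<Suc i]) [a..<Suc i]"
proof (induction Z)
  case Nil then show ?case by (simp add: quot_cong.refl)
next
  case (Cons c Z)
  have 1: "quot_cong N ([c] @ (Z @ [a..<Suc i]) @ []) ([c] @ [a..<Suc i] @ [])"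
    using Cons by (intro qc_ctx) (auto simp: is_word_def)
  have 2: "quot_cong N (c # [a..<Suc i]) [a..<Suc i]" using Cons by (intro qc_left_absorb1) auto
  show ?case using 1 2 by (simp only: append_assoc append_Cons append_Nil append_Nil2) (rule qc_trans)
qed

lemma qc_right_absorb: "\<forall>c\<in>set Z. a \<le> c \<and> c \<le> i \<Longrightarrow> 1 \<le> a \<Longrightarrow> i < N
   \<Longrightarrow> quot_cong N ([a..<Suc i] @ Z) [a..<Suc i]"
proof (induction Z rule: rev_induct)
  case Nil then show ?case by (simp add: quot_cong.refl)
next
  case (snoc c Z)
  have 1: "quot_cong N ([] @ ([a..<Suc i] @ Z) @ [c]) ([] @ [a..<Suc i] @ [c])"
    using snoc by (intro qc_ctx) (auto simp: is_word_def)
  have 2: "quot_cong N ([a..<Suc i] @ [c]) [a..<Suc i]" using snoc by (intro qc_right_absorb1) auto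
  show ?case using 1 2 by (simp only: append_assoc append_Cons append_Nil append_Nil2) (rule qc_trans)
qed


definition fi :: "nat \<Rightarrow> nat \<Rightarrow> nat" where "fi i j = (if j = Suc i then i else j)"
definition fw :: "nat list \<Rightarrow> nat \<Rightarrow> nat" where "fw w = foldr (\<lambda>i h. fi i \<circ> h) w id"

lemma foldr_comp_gen: "foldr (\<lambda>i h. g i \<circ> h) u k = foldr (\<lambda>i h. g i \<circ> h) u id \<circ> k"
  by (induction u) auto

lemma fw_append: "fw (u @ v) = fw u \<circ> fw v"
  by (induction u) (simp_all add: fw_def comp_assoc)

lemma fw_Nil: "fw [] = id" by (simp add: fw_def)

lemma fw_snoc: "fw (u @ [i]) = fw u \<circ> fi i"
  proof -
  have "fw [i] = fi i" by (simp add: fw_def)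
  then show ?thesis by (simp only: fw_append)
qed

definition good :: "(nat \<Rightarrow> nat) \<Rightarrow> bool" where
  "good h \<longleftrightarrow> mono h \<and> (\<forall>j. h j \<le> j) \<and> (\<forall>j. 1 \<le> j \<longrightarrow> 1 \<le> h j)"

lemma mono_fi: "mono (fi i)"
  by (auto simp: mono_def fi_def)

lemma good_id: "good id" by (simp add: good_def mono_def)

lemma good_step: "good h \<Longrightarrow> 1 \<le> i \<Longrightarrow> good (h \<circ> fi i)"
  unfolding good_def
proof (intro conjI allI impI)
  assume g: "mono h \<and> (\<forall>j. h j \<le> j) \<and> (\<forall>j. 1 \<le> j \<longrightarrow> 1 \<le> h j)" and i: "1 \<le> i"
  show "mono (h \<circ> fi i)" using g mono_fi by (auto simp: mono_def)
  fix j
  show "(h \<circ> fi i) j \<le> j" using g by (simp add: fi_def) (metis le_SucI)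
  assume "1 \<le> j" then show "1 \<le> (h \<circ> fi i) j" using g i by (simp add: fi_def)
qed

lemma good_fw: "is_word N w \<Longrightarrow> good (fw w)"
  by (induction w rule: rev_induct) (auto simp: fw_snoc good_id fw_Nil intro!: good_step)

definition blk :: "(nat \<Rightarrow> nat) \<Rightarrow> nat \<Rightarrow> nat list" where "blk h j = [h j..<j]"
definition cw :: "nat \<Rightarrow> (nat \<Rightarrow> nat) \<Rightarrow> nat list" where
  "cw N h = concat (map (blk h) (rev [1..<Suc N]))"

lemma cw_cong: "(\<And>j. j \<in> {1..N} \<Longrightarrow> h j = g j) \<Longrightarrow> cw N h = cw N g"
  unfolding cw_def blk_def by (intro arg_cong[where f=concat] map_cong) auto

lemma cw_id: "cw N id = []"
  by (simp add: cw_def blk_def)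

lemma is_word_concat: "(\<And>j. j \<in> set js \<Longrightarrow> is_word N (f j)) \<Longrightarrow> is_word N (concat (map f js))"
  by (induction js) auto

lemma key: assumes g: "good h" and i: "1 \<le> i" "i < N"
  shows "quot_cong N (cw N h @ [i]) (cw N (h \<circ> fi i))"
proof -
  let ?h' = "h \<circ> fi i"
  have split: "rev [1..<Suc N] = rev [i+2..<Suc N] @ [Suc i, i] @ rev [1..<i]"
    using i upt_split[of 1 i "Suc N"] upt_conv_Cons[of i "Suc N"] upt_conv_Cons[of "Suc i" "Suc N"] by simp
  define X where "X = concat (map (blk h) (rev [i+2..<Suc N]))"
  define Y where "Y = concat (map (blk h) (rev [1..<i]))"
  have X': "concat (map (blk ?h') (rev [i+2..<Suc N])) = X"
    unfolding X_def blk_def by (intro arg_cong[where f=concat] map_cong) (auto simp: fi_def)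
  have Y': "concat (map (blk ?h') (rev [1..<i])) = Y"
    unfolding Y_def blk_def by (intro arg_cong[where f=concat] map_cong) (auto simp: fi_def)
  have e1: "cw N h = X @ [h (Suc i)..<Suc i] @ [h i..<i] @ Y"
    unfolding cw_def split X_def Y_def by (simp add: blk_def)
  have e2: "cw N ?h' = X @ [h i..<Suc i] @ [h i..<i] @ Y"
    unfolding cw_def split X'[symmetric] Y'[symmetric] by (simp add: blk_def fi_def)
  have gh: "\<And>j. h j \<le> j" "\<And>j. 1 \<le> j \<Longrightarrow> 1 \<le> h j" "mono h" using g by (auto simp: good_def)
  have hi: "1 \<le> h i" "h i \<le> i" "h i \<le> h (Suc i)" "h (Suc i) \<le> Suc i"
    using gh i by (auto simp: mono_def)
  have wX: "is_word N X" unfolding X_def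
  proof (rule is_word_concat)
    fix j assume "j \<in> set (rev [i+2..<Suc N])"
    then have "1 \<le> j" "j \<le> N" by auto
    then show "is_word N (blk h j)" using gh(2)[of j] by (auto simp: blk_def is_word_def)
  qed
  have wY: "is_word N Y" unfolding Y_def
    by (rule is_word_concat) (use gh i in \<open>auto simp: blk_def is_word_def\<close>)
  have Yc: "\<forall>c\<in>set Y. c + 2 \<le> i \<or> i + 2 \<le> c" unfolding Y_def by (auto simp: blk_def)
  have 1: "quot_cong N (X @ [h (Suc i)..<Suc i] @ [h i..<i] @ (Y @ [i]))
                        (X @ [h (Suc i)..<Suc i] @ [h i..<i] @ (i # Y))"
    using qc_ctx[OF qc_comm_list[OF wY i(1) i(2) Yc], of "X @ [h (Suc i)..<Suc i] @ [h i..<i]" "[]"]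
      wX hi i by (simp add: is_word_upt)
  have ch: "[h i..<i] @ [i] = [h i..<Suc i]" using hi by simp
  have 2: "quot_cong N ([h (Suc i)..<Suc i] @ [h i..<Suc i]) [h i..<Suc i]"
    using hi i by (intro qc_left_absorb) auto
  have 3: "quot_cong N ([h i..<Suc i] @ [h i..<i]) [h i..<Suc i]"
    using hi i by (intro qc_right_absorb) auto
  have 4: "quot_cong N (X @ ([h (Suc i)..<Suc i] @ [h i..<Suc i]) @ Y) (X @ ([h i..<Suc i] @ [h i..<i]) @ Y)"
    by (rule qc_ctx[OF qc_trans[OF 2 qc_sym[OF 3]] wX wY])
  have 5: "X @ [h (Suc i)..<Suc i] @ [h i..<i] @ (i # Y) = X @ ([h (Suc i)..<Suc i] @ [h i..<Suc i]) @ Y"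
    using ch[symmetric] by simp
  show ?thesis unfolding e1 e2 using qc_trans[OF 1 4[folded 5]] by simp
qed

lemma complete0: "is_word N w \<Longrightarrow> quot_cong N w (cw N (fw w))"
proof (induction w rule: rev_induct)
  case Nil then show ?case by (simp only: fw_Nil cw_id quot_cong.refl)
next
  case (snoc i w)
  then have w: "is_word N w" and i: "1 \<le> i" "i < N" by auto
  have 1: "quot_cong N ([] @ w @ [i]) ([] @ cw N (fw w) @ [i])"
    using snoc w i by (intro qc_ctx) auto
  have 2: "quot_cong N (cw N (fw w) @ [i]) (cw N (fw w \<circ> fi i))"
    by (rule key[OF good_fw[OF w] i])
  show ?case unfolding fw_snoc by (rule qc_trans[OF 1[simplified] 2])
qed

lemma complete: "is_word N w \<Longrightarrow> is_word N v \<Longrightarrow> (\<And>j. j \<in> {1..N} \<Longrightarrow> fw w j = fw v j)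
  \<Longrightarrow> quot_cong N w v"
  using complete0[of N w] complete0[of N v] cw_cong[of N "fw w" "fw v"]
  by (metis qc_sym qc_trans)


lemma word_perm_Nil: "word_perm [] = id" by (simp add: word_perm_def)

lemma word_perm_append: "word_perm (u @ v) = word_perm u \<circ> word_perm v"
  by (induction u) (simp_all add: word_perm_def comp_assoc)

lemma word_perm_snoc: "word_perm (u @ [i]) = word_perm u \<circ> st i"
proof -
  have "word_perm [i] = st i" by (simp add: word_perm_def)
  then show ?thesis by (simp only: word_perm_append)
qed

lemma st_permutes: "1 \<le> i \<Longrightarrow> i < N \<Longrightarrow> st i permutes {1..N}"
  unfolding st_def by (rule permutes_swap_id) auto

lemma perm_word: "is_word N w \<Longrightarrow> word_perm w permutes {1..N}"
proof (induction w rule: rev_induct)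
  case Nil then show ?case by (simp only: word_perm_Nil) (rule permutes_id)
next
  case (snoc i w)
  then show ?case unfolding word_perm_snoc
    by (intro permutes_compose st_permutes) auto
qed

definition invs :: "nat \<Rightarrow> (nat \<Rightarrow> nat) \<Rightarrow> (nat \<times> nat) set" where
  "invs N x = {(a,b). 1 \<le> a \<and> a < b \<and> b \<le> N \<and> x b < x a}"
definition invn :: "nat \<Rightarrow> (nat \<Rightarrow> nat) \<Rightarrow> nat" where
  "invn N x = card (invs N x)"

lemma finite_invs: "finite (invs N x)"
  by (rule finite_subset[of _ "{1..N} \<times> {1..N}"]) (auto simp: invs_def)

lemma invn_id: "invn N id = 0"
proof -
  have "invs N id = {}" by (auto simp: invs_def)
  then show ?thesis by (simp add: invn_def)
qed

lemma invs_swap: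
  assumes i: "1 \<le> i" "i < N"
  shows "invs N (x \<circ> st i) - {(i, Suc i)} = (\<lambda>(a,b). (st i a, st i b)) ` (invs N x - {(i, Suc i)})"
proof (intro equalityI subsetI)
  fix z assume z: "z \<in> invs N (x \<circ> st i) - {(i, Suc i)}"
  obtain a b where ab: "z = (a,b)" by (cases z)
  have m: "(st i a, st i b) \<in> invs N x - {(i, Suc i)}"
    using z i unfolding ab invs_def st_def by (auto simp: transpose_def split: if_splits)
  have "z = (\<lambda>(a,b). (st i a, st i b)) (st i a, st i b)" using ab by (simp add: st_def)
  then show "z \<in> (\<lambda>(a,b). (st i a, st i b)) ` (invs N x - {(i, Suc i)})" using m by blast
next
  fix z assume "z \<in> (\<lambda>(a,b). (st i a, st i b)) ` (invs N x - {(i, Suc i)})"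
  then obtain a b where ab: "z = (st i a, st i b)" "(a,b) \<in> invs N x - {(i, Suc i)}" by auto
  then show "z \<in> invs N (x \<circ> st i) - {(i, Suc i)}"
    using i unfolding invs_def st_def by (auto simp: transpose_def split: if_splits)
qed

lemma card_invs_minus:
  assumes i: "1 \<le> i" "i < N"
  shows "card (invs N (x \<circ> st i) - {(i, Suc i)}) = card (invs N x - {(i, Suc i)})"
proof -
  have "inj_on (\<lambda>(a,b). (st i a, st i b)) (invs N x - {(i, Suc i)})"
    by (rule inj_onI) (auto simp: st_def dest: transpose_eq_imp_eq)
  then show ?thesis unfolding invs_swap[OF i] by (rule card_image)
qed

lemma invn_step:
  assumes x: "x permutes {1..N}" and i: "1 \<le> i" "i < N"
  shows "x i < x (Suc i) \<Longrightarrow> invn N (x \<circ> st i) = Suc (invn N x)"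
    and "x (Suc i) < x i \<Longrightarrow> Suc (invn N (x \<circ> st i)) = invn N x"
proof -
  have c: "card (invs N (x \<circ> st i) - {(i, Suc i)}) = card (invs N x - {(i, Suc i)})"
    by (rule card_invs_minus[OF i])
  have p1: "(i, Suc i) \<in> invs N (x \<circ> st i) \<longleftrightarrow> x i < x (Suc i)"
    using i by (simp add: invs_def st_def)
  have p2: "(i, Suc i) \<in> invs N x \<longleftrightarrow> x (Suc i) < x i"
    using i by (simp add: invs_def)
  show "x i < x (Suc i) \<Longrightarrow> invn N (x \<circ> st i) = Suc (invn N x)"
  proof -
    assume a: "x i < x (Suc i)"
    then have "(i, Suc i) \<notin> invs N x" using p2 by simp
    then have "invs N x - {(i, Suc i)} = invs N x" by simp
    moreover have "card (invs N (x \<circ> st i)) = Suc (card (invs N (x \<circ> st i) - {(i, Suc i)}))"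
      using p1 a finite_invs by (metis card_Suc_Diff1)
    ultimately show ?thesis using c by (simp add: invn_def)
  qed
  show "x (Suc i) < x i \<Longrightarrow> Suc (invn N (x \<circ> st i)) = invn N x"
  proof -
    assume a: "x (Suc i) < x i"
    then have "(i, Suc i) \<notin> invs N (x \<circ> st i)" using p1 by simp
    then have "invs N (x \<circ> st i) - {(i, Suc i)} = invs N (x \<circ> st i)" by simp
    moreover have "card (invs N x) = Suc (card (invs N x - {(i, Suc i)}))"
      using p2 a finite_invs by (metis card_Suc_Diff1)
    ultimately show ?thesis using c by (simp add: invn_def)
  qed
qed

lemma perm_neq: "x permutes {1..N} \<Longrightarrow> 1 \<le> i \<Longrightarrow> i < N \<Longrightarrow> x i \<noteq> x (Suc i)"
  by (metis n_not_Suc_n permutes_inj injD)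

lemma invn_le: "is_word N w \<Longrightarrow> invn N (word_perm w) \<le> length w"
proof (induction w rule: rev_induct)
  case Nil then show ?case by (simp only: word_perm_Nil invn_id)
next
  case (snoc i w)
  then have w: "is_word N w" and i: "1 \<le> i" "i < N" by auto
  have x: "word_perm w permutes {1..N}" by (rule perm_word[OF w])
  have "invn N (word_perm w \<circ> st i) \<le> Suc (invn N (word_perm w))"
    using invn_step[OF x i] perm_neq[OF x i] by (cases "word_perm w i < word_perm w (Suc i)") auto
  then show ?case using snoc.IH[OF w] unfolding word_perm_snoc length_append_singleton by linarith
qed

lemma no_descent_id:
  assumes x: "x permutes {1..N}" and nd: "\<And>i. 1 \<le> i \<Longrightarrow> i < N \<Longrightarrow> x i < x (Suc i)"
  shows "x = id"
proof -
  have inr: "\<And>j. 1 \<le> j \<Longrightarrow> j \<le> N \<Longrightarrow> 1 \<le> x j \<and> x j \<le> N"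
    using permutes_in_image[OF x] by auto
  have ge: "1 \<le> j \<longrightarrow> j \<le> N \<longrightarrow> j \<le> x j" for j
  proof (induction j)
    case 0 then show ?case by simp
  next
    case (Suc j)
    show ?case
    proof (cases "j = 0")
      case True then show ?thesis using inr[of 1] by simp
    next
      case False then show ?thesis using Suc nd[of j] by auto
    qed
  qed
  have le: "k < N \<longrightarrow> x (N - k) \<le> N - k" for k
  proof (induction k)
    case 0 then show ?case using inr[of N] by simp
  next
    case (Suc k)
    show ?case
    proof
      assume k: "Suc k < N"
      have e: "Suc (N - Suc k) = N - k" using k by simp
      have "x (N - Suc k) < x (Suc (N - Suc k))" using k by (intro nd) auto
      then show "x (N - Suc k) \<le> N - Suc k" using Suc k e by auto
    qed
  qed
  show ?thesis
  proof
    fix j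
    show "x j = id j"
    proof (cases "j \<in> {1..N}")
      case True
      then have "x j \<le> j" using le[of "N - j"] by auto
      then show ?thesis using ge[of j] True by simp
    next
      case False then show ?thesis using permutes_not_in[OF x] by simp
    qed
  qed
qed

lemma sort_word: "x permutes {1..N} \<Longrightarrow> \<exists>w. is_word N w \<and> word_perm w = x \<and> length w \<le> invn N x"
proof (induction "invn N x" arbitrary: x rule: less_induct)
  case less
  show ?case
  proof (cases "x = id")
    case True then show ?thesis by (intro exI[of _ "[]"]) (simp add: word_perm_Nil)
  next
    case False
    then obtain i where i: "1 \<le> i" "i < N" "\<not> x i < x (Suc i)"
      using no_descent_id[OF less.prems] by blast
    then have d: "x (Suc i) < x i" using perm_neq[OF less.prems i(1,2)] by simp
    let ?y = "x \<circ> st i"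
    have y: "?y permutes {1..N}" by (intro permutes_compose st_permutes less.prems i)
    have lt: "Suc (invn N ?y) = invn N x" by (rule invn_step(2)[OF less.prems i(1,2) d])
    obtain v where v: "is_word N v" "word_perm v = ?y" "length v \<le> invn N ?y"
      using less.hyps[of ?y] lt y by auto
    have "word_perm (v @ [i]) = x" using v by (simp add: word_perm_snoc comp_assoc st_def)
    then show ?thesis using v i lt by (intro exI[of _ "v @ [i]"]) auto
  qed
qed

lemma red_props:
  assumes x: "x permutes {1..N}"
  shows "is_word N (red_word N x) \<and> word_perm (red_word N x) = x \<and> invn N x = length (red_word N x)"
proof -
  obtain v where v: "is_word N v" "word_perm v = x" "length v \<le> invn N x" using sort_word[OF x] by blast
  obtain w where w: "is_word N w \<and> word_perm w = x"
     "\<forall>u. is_word N u \<and> word_perm u = x \<longrightarrow> length w \<le> length u"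
    using ex_has_least_nat[of "\<lambda>w. is_word N w \<and> word_perm w = x" v length] v by blast
  have "reduced_word N x w" using w by (simp add: reduced_word_def)
  then have r: "reduced_word N x (red_word N x)" unfolding red_word_def by (rule someI)
  then have 1: "is_word N (red_word N x)" "word_perm (red_word N x) = x"
    "length (red_word N x) \<le> length v" using v by (auto simp: reduced_word_def)
  have "invn N x \<le> length (red_word N x)" using invn_le[OF 1(1)] 1(2) by simp
  then show ?thesis using 1 v by simp
qed


lemma Min_ins2: "finite S \<Longrightarrow> a < b \<Longrightarrow> Min (insert a (insert b S)) = Min (insert a S)"
  by (cases "S = {}") (auto simp: Min_insert min_def)

lemma Max_ins2: "finite S \<Longrightarrow> b < a \<Longrightarrow> Max (insert a (insert b S)) = Max (insert a S)"
  by (cases "S = {}") (auto simp: Max_insert max_def)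

lemma img_o: "(f \<circ> g) ` A = f ` (g ` A)" by (simp add: image_comp)

lemma Psi_snoc: "Psi N (w @ [i]) = Psi N w @ [N - i]" by (simp add: Psi_def)

lemma is_word_Psi: "is_word N w \<Longrightarrow> is_word N (Psi N w)"
  by (force simp: is_word_def Psi_def)

lemma formula:
  "is_word N w \<Longrightarrow> invn N (word_perm w) = length w \<Longrightarrow>
    (\<forall>j\<in>{1..N}. fw w j = Min (word_perm w ` {j..N})) \<and>
    (\<forall>j\<in>{1..N}. fw (Psi N w) j = Suc N - Max (word_perm w ` {1..Suc N - j}))"
proof (induction w rule: rev_induct)
  case Nil
  have "Psi N [] = []" by (simp add: Psi_def)
  have a: "Min {j..N} = j" if "j \<in> {1..N}" for j using that by (intro Min_eqI) auto
  have b: "Max {1..Suc N - j} = Suc N - j" if "j \<in> {1..N}" for j using that by (intro Max_eqI) auto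
  show ?case using a b \<open>Psi N [] = []\<close> by (simp add: word_perm_Nil fw_Nil)
next
  case (snoc i w)
  then have w: "is_word N w" and i: "1 \<le> i" "i < N" by auto
  define y where "y = word_perm w"
  have y: "y permutes {1..N}" unfolding y_def by (rule perm_word[OF w])
  have len: "invn N (y \<circ> st i) = Suc (length w)" using snoc.prems(2) unfolding y_def word_perm_snoc length_append_singleton .
  have le: "invn N y \<le> length w" unfolding y_def by (rule invn_le[OF w])
  have asc: "y i < y (Suc i)"
  proof (rule ccontr)
    assume "\<not> y i < y (Suc i)"
    then have "y (Suc i) < y i" using perm_neq[OF y i] by simp
    then show False using invn_step(2)[OF y i] len le by simp
  qed
  have "invn N y = length w" using invn_step(1)[OF y i asc] len by simp
  then have IH: "\<forall>j\<in>{1..N}. fw w j = Min (y ` {j..N})"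
    "\<forall>j\<in>{1..N}. fw (Psi N w) j = Suc N - Max (y ` {1..Suc N - j})"
    using snoc.IH[OF w] unfolding y_def by auto
  have wp: "word_perm (w @ [i]) = y \<circ> st i" unfolding y_def by (rule word_perm_snoc)
  have A: "fw (w @ [i]) j = Min ((y \<circ> st i) ` {j..N})" if j: "j \<in> {1..N}" for j
  proof (cases "j = Suc i")
    case True
    have e1: "(y \<circ> st i) ` {j..N} = insert (y i) (y ` {Suc (Suc i)..N})"
    proof -
      have "{j..N} = insert (Suc i) {Suc (Suc i)..N}" using True i by auto
      moreover have "st i ` {Suc (Suc i)..N} = {Suc (Suc i)..N}" unfolding st_def
        by (rule transpose_image_eq) auto
      ultimately show ?thesis unfolding img_o by (simp add: st_def)
    qed
    have e2: "y ` {i..N} = insert (y i) (insert (y (Suc i)) (y ` {Suc (Suc i)..N}))"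
    proof -
      have "{i..N} = insert i (insert (Suc i) {Suc (Suc i)..N})" using i by auto
      then show ?thesis by simp
    qed
    have "fw (w @ [i]) j = fw w i" using True by (simp add: fw_snoc fi_def)
    also have "\<dots> = Min (y ` {i..N})" using IH(1) i by auto
    also have "\<dots> = Min ((y \<circ> st i) ` {j..N})" unfolding e1 e2 using asc by (intro Min_ins2) auto
    finally show ?thesis .
  next
    case False
    have "st i ` {j..N} = {j..N}" unfolding st_def using False i by (intro transpose_image_eq) auto
    then have "(y \<circ> st i) ` {j..N} = y ` {j..N}" unfolding img_o by simp
    moreover have "fw (w @ [i]) j = fw w j" using False by (simp add: fw_snoc fi_def)
    ultimately show ?thesis using IH(1) j by simp
  qed
  have B: "fw (Psi N (w @ [i])) j = Suc N - Max ((y \<circ> st i) ` {1..Suc N - j})" if j: "j \<in> {1..N}" for j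
  proof (cases "j = Suc (N - i)")
    case True
    have m: "Suc N - j = i" using True i by simp
    have e1: "(y \<circ> st i) ` {1..i} = insert (y (Suc i)) (y ` {1..<i})"
    proof -
      have "{1..i} = insert i {1..<i}" using i by auto
      moreover have "st i ` {1..<i} = {1..<i}" unfolding st_def
        by (rule transpose_image_eq) auto
      ultimately show ?thesis unfolding img_o by (simp add: st_def)
    qed
    have e2: "y ` {1..Suc i} = insert (y (Suc i)) (insert (y i) (y ` {1..<i}))"
    proof -
      have "{1..Suc i} = insert (Suc i) (insert i {1..<i})" using i by auto
      then show ?thesis by simp
    qed
    have "fw (Psi N (w @ [i])) j = fw (Psi N w) (N - i)" using True by (simp add: Psi_snoc fw_snoc fi_def)
    also have "\<dots> = Suc N - Max (y ` {1..Suc N - (N - i)})" using IH(2) i by auto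
    also have "Suc N - (N - i) = Suc i" using i by simp
    also have "Suc N - Max (y ` {1..Suc i}) = Suc N - Max ((y \<circ> st i) ` {1..Suc N - j})"
      unfolding m e1 e2 using asc by (intro arg_cong[where f="\<lambda>t. Suc N - t"] Max_ins2) auto
    finally show ?thesis .
  next
    case False
    have "st i ` {1..Suc N - j} = {1..Suc N - j}" unfolding st_def using False i j by (intro transpose_image_eq) auto
    then have "(y \<circ> st i) ` {1..Suc N - j} = y ` {1..Suc N - j}" unfolding img_o by simp
    moreover have "fw (Psi N (w @ [i])) j = fw (Psi N w) j" using False by (simp add: Psi_snoc fw_snoc fi_def)
    ultimately show ?thesis using IH(2) j by simp
  qed
  show ?case unfolding wp using A B by blast
qed

lemma Min_insert_smaller: "finite C \<Longrightarrow> c \<in> C \<Longrightarrow> c < a \<Longrightarrow> Min (insert a C) = Min C"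
  by (metis Min.insert Min_le empty_iff min.absorb2 nless_le order.strict_trans1 order.trans)

lemma Max_insert_smaller: "finite C \<Longrightarrow> c \<in> C \<Longrightarrow> a < c \<Longrightarrow> Max (insert a C) = Max C"
  by (metis Max.insert Max_ge empty_iff max.absorb2 less_imp_le order.trans)

lemma image_swap_one: assumes "q \<notin> A" "r \<in> A" shows "(x \<circ> Transposition.transpose q r) ` A = insert (x q) (x ` (A - {r}))"
proof -
  have "Transposition.transpose q r ` A = insert q (A - {r})"
    using assms by (auto simp: transpose_def image_iff split: if_splits)
  then show ?thesis unfolding img_o by simp
qed

lemma image_swap_one': assumes "q \<in> A" "r \<notin> A" shows "(x \<circ> Transposition.transpose q r) ` A = insert (x r) (x ` (A - {q}))"
proof -
  have "Transposition.transpose q r ` A = insert r (A - {q})"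
    using assms by (auto simp: transpose_def image_iff split: if_splits)
  then show ?thesis unfolding img_o by simp
qed

lemma swap_Min:
  assumes pat: "is_4321 N x p q r s" and j: "j \<in> {1..N}"
  shows "Min ((x \<circ> Transposition.transpose q r) ` {j..N}) = Min (x ` {j..N})"
proof (cases "q < j \<and> j \<le> r")
  case True
  have A: "{j..N} = insert r ({j..N} - {r})" using True pat by (auto simp: is_4321_def)
  have s: "x s \<in> x ` ({j..N} - {r})" using True pat by (auto simp: is_4321_def)
  have "Min ((x \<circ> Transposition.transpose q r) ` {j..N}) = Min (insert (x q) (x ` ({j..N} - {r})))"
    using True pat by (subst image_swap_one) (auto simp: is_4321_def)
  also have "\<dots> = Min (x ` ({j..N} - {r}))" using s pat by (intro Min_insert_smaller) (auto simp: is_4321_def)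
  also have "\<dots> = Min (insert (x r) (x ` ({j..N} - {r})))" using s pat by (intro Min_insert_smaller[symmetric]) (auto simp: is_4321_def)
  also have "\<dots> = Min (x ` {j..N})" using A by (metis image_insert)
  finally show ?thesis .
next
  case False
  have "Transposition.transpose q r ` {j..N} = {j..N}" using False pat by (intro transpose_image_eq) (auto simp: is_4321_def)
  then show ?thesis unfolding img_o by simp
qed

lemma swap_Max:
  assumes pat: "is_4321 N x p q r s" and m: "m \<in> {1..N}"
  shows "Max ((x \<circ> Transposition.transpose q r) ` {1..m}) = Max (x ` {1..m})"
proof (cases "q \<le> m \<and> m < r")
  case True
  have A: "{1..m} = insert q ({1..m} - {q})" using True pat by (auto simp: is_4321_def)
  have s: "x p \<in> x ` ({1..m} - {q})" using True pat by (auto simp: is_4321_def)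
  have "Max ((x \<circ> Transposition.transpose q r) ` {1..m}) = Max (insert (x r) (x ` ({1..m} - {q})))"
    using True pat by (subst image_swap_one') (auto simp: is_4321_def)
  also have "\<dots> = Max (x ` ({1..m} - {q}))" using s pat by (intro Max_insert_smaller) (auto simp: is_4321_def)
  also have "\<dots> = Max (insert (x q) (x ` ({1..m} - {q})))" using s pat by (intro Max_insert_smaller[symmetric]) (auto simp: is_4321_def)
  also have "\<dots> = Max (x ` {1..m})" using A by (metis image_insert)
  finally show ?thesis .
next
  case False
  have "Transposition.transpose q r ` {1..m} = {1..m}" using False pat by (intro transpose_image_eq) (auto simp: is_4321_def)
  then show ?thesis unfolding img_o by simp
qed

lemma phi_eq: "quot_cong N a b \<Longrightarrow> phi N a = phi N b"
  unfolding phi_def by (auto intro: qc_trans qc_sym)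

theorem mainTheorem13:
  fixes N :: nat and x :: "nat \<Rightarrow> nat" and p q r s :: nat
  assumes "x permutes {1..N}"
    and "minimal_4321 N x p q r s"
  shows "omega_perm N (x \<circ> Transposition.transpose q r) = omega_perm N x"
proof -
  have pat: "is_4321 N x p q r s" using assms(2) by (simp add: minimal_4321_def)
  define x' where "x' = x \<circ> Transposition.transpose q r"
  have x': "x' permutes {1..N}" unfolding x'_def
    using pat by (intro permutes_compose[OF _ assms(1)] permutes_swap_id) (auto simp: is_4321_def)
  define w where "w = red_word N x"
  define w' where "w' = red_word N x'"
  have rw: "is_word N w" "word_perm w = x" "invn N (word_perm w) = length w"
    using red_props[OF assms(1)] unfolding w_def by auto
  have rw': "is_word N w'" "word_perm w' = x'" "invn N (word_perm w') = length w'"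
    using red_props[OF x'] unfolding w'_def by auto
  note F = formula[OF rw(1) rw(3)] and F' = formula[OF rw'(1) rw'(3)]
  have 1: "quot_cong N w' w"
  proof (rule complete[OF rw'(1) rw(1)])
    fix j assume j: "j \<in> {1..N}"
    show "fw w' j = fw w j" using F F' j swap_Min[OF pat j] rw(2) rw'(2) unfolding x'_def by simp
  qed
  have 2: "quot_cong N (Psi N w') (Psi N w)"
  proof (rule complete[OF is_word_Psi[OF rw'(1)] is_word_Psi[OF rw(1)]])
    fix j assume j: "j \<in> {1..N}"
    have m: "Suc N - j \<in> {1..N}" using j by auto
    show "fw (Psi N w') j = fw (Psi N w) j" using F F' j swap_Max[OF pat m] rw(2) rw'(2) unfolding x'_def by simp
  qed
  show ?thesis unfolding omega_perm_def omega_def x'_def[symmetric] w_def[symmetric] w'_def[symmetric]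
    using phi_eq[OF 1] phi_eq[OF 2] by simp
qed

end
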